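(* On $\mathbb{R}^d$ with Cartesian coordinates $x^1,\dots,x^d$, let $\vec E=\sum_i x^i\,\partial/\partial x^i$ be the Euler vector field and let $\vec V=\sum_j V^j(x^1,\dots,x^d)\,\partial/\partial x^j$ be a nonzero vector field whose coefficients $V^j$ are homogeneous polynomials of the same total degree $k\geq 2$. Then the bi-vector $P=\vec V\wedge\vec E$ is Poisson, i.e. $[\![P,P]\!]=0$.
   Context: $[\![\cdot,\cdot]\!]$ denotes the Schouten bracket of multivector fields. *)

theory Defs
  imports "HOL-Analysis.Analysis"
begin

text \<open>Points of R^d are vectors real^'d, coordinates x$i. A vector field is given by
its coefficient functions X i; a bivector field by its components P i j.\<close>

definition partial :: "'d::finite \<Rightarrow> (real^'d \<Rightarrow> real) \<Rightarrow> real^'d \<Rightarrow> real" where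
  "partial l f x = deriv (\<lambda>t. f (x + t *\<^sub>R axis l 1)) 0"

definition homogeneous_poly :: "nat \<Rightarrow> (real^'d::finite \<Rightarrow> real) \<Rightarrow> bool" where
  "homogeneous_poly k f \<longleftrightarrow> (\<exists>(A :: ('d \<Rightarrow> nat) set) (c :: ('d \<Rightarrow> nat) \<Rightarrow> real).
      finite A \<and> (\<forall>\<alpha>\<in>A. sum \<alpha> UNIV = k) \<and>
      (\<forall>x. f x = (\<Sum>\<alpha>\<in>A. c \<alpha> * (\<Prod>i\<in>UNIV. (x $ i) ^ (\<alpha> i)))))"

definition euler_field :: "'d::finite \<Rightarrow> real^'d \<Rightarrow> real" where
  "euler_field i x = x $ i"

definition wedge2 :: "('d \<Rightarrow> real^'d \<Rightarrow> real) \<Rightarrow> ('d \<Rightarrow> real^'d \<Rightarrow> real)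
    \<Rightarrow> 'd \<Rightarrow> 'd \<Rightarrow> real^'d \<Rightarrow> real" where
  "wedge2 X Y i j x = X i x * Y j x - X j x * Y i x"

text \<open>Components of the Schouten bracket [[P,P]] of a bivector with itself, in coordinates
(up to the convention-dependent overall factor 2):
 [[P,P]]^{ijk} = sum_l (P^{il} d_l P^{jk} + P^{jl} d_l P^{ki} + P^{kl} d_l P^{ij}).\<close>
definition schouten_self :: "('d::finite \<Rightarrow> 'd \<Rightarrow> real^'d \<Rightarrow> real) \<Rightarrow> 'd \<Rightarrow> 'd \<Rightarrow> 'd \<Rightarrow> real^'d \<Rightarrow> real" where
  "schouten_self P i j k x = (\<Sum>l\<in>UNIV.
      P i l x * partial l (P j k) x + P j l x * partial l (P k i) x + P k l x * partial l (P i j) x)"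

definition poisson_bivector :: "('d::finite \<Rightarrow> 'd \<Rightarrow> real^'d \<Rightarrow> real) \<Rightarrow> bool" where
  "poisson_bivector P \<longleftrightarrow> (\<forall>i j k x. schouten_self P i j k x = 0)"

end

theory Submission
  imports Defs
begin

lemma partial_hd:
  assumes "(f has_derivative f') (at x)"
  shows "partial l f x = f' (axis l 1)"
proof -
  have lin: "linear f'" using assms has_derivative_linear by blast
  have "((\<lambda>t. x + t *\<^sub>R axis l 1) has_derivative (\<lambda>t. t *\<^sub>R axis l 1)) (at 0)"
    by (auto intro!: derivative_eq_intros)
  moreover have "(f has_derivative f') (at (x + 0 *\<^sub>R axis l 1))" using assms by simp
  ultimately have "((\<lambda>t. f (x + t *\<^sub>R axis l 1)) has_derivative (\<lambda>t. f' (t *\<^sub>R axis l 1))) (at 0)"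
    using has_derivative_compose[of "\<lambda>t. x + t *\<^sub>R axis l 1" _ 0 UNIV f f'] by (simp add: o_def)
  moreover have "(\<lambda>t. f' (t *\<^sub>R axis l 1)) = (\<lambda>t. t * f' (axis l 1))"
    using lin by (simp add: linear_scale)
  ultimately have "((\<lambda>t. f (x + t *\<^sub>R axis l 1)) has_derivative (\<lambda>t. f' (axis l 1) * t)) (at 0)"
    by (simp add: mult.commute)
  then have "((\<lambda>t. f (x + t *\<^sub>R axis l 1)) has_field_derivative f' (axis l 1)) (at 0)"
    by (simp add: has_field_derivative_def)
  then show ?thesis unfolding partial_def by (rule DERIV_imp_deriv)
qed

lemma hp_homog:
  assumes "homogeneous_poly k f"
  shows "f (c *\<^sub>R x) = c ^ k * f x"
proof -
  obtain A coef where A: "finite A" "\<forall>\<alpha>\<in>A. sum \<alpha> UNIV = k"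
    "\<forall>x. f x = (\<Sum>\<alpha>\<in>A. coef \<alpha> * (\<Prod>i\<in>UNIV. (x $ i) ^ (\<alpha> i)))"
    using assms unfolding homogeneous_poly_def by blast
  have "(\<Prod>i\<in>UNIV. (c * x $ i) ^ (\<alpha> i)) = c ^ k * (\<Prod>i\<in>UNIV. (x $ i) ^ (\<alpha> i))"
    if "\<alpha> \<in> A" for \<alpha>
  proof -
    have "(\<Prod>i\<in>UNIV. c ^ \<alpha> i) = c ^ k" using power_sum[of c \<alpha> UNIV] A(2) that by simp
    then show ?thesis by (simp add: power_mult_distrib prod.distrib)
  qed
  then show ?thesis using A(3)
    by (simp add: sum_distrib_left algebra_simps)
qed

lemma differentiable_prod':
  fixes f :: "'i \<Rightarrow> 'a::real_normed_vector \<Rightarrow> 'b::real_normed_field"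
  assumes "\<And>i. i \<in> I \<Longrightarrow> f i differentiable (at x)"
  shows "(\<lambda>x. \<Prod>i\<in>I. f i x) differentiable (at x)"
proof -
  from assms obtain D where "\<And>i. i \<in> I \<Longrightarrow> (f i has_derivative D i) (at x)"
    unfolding differentiable_def by metis
  then show ?thesis using has_derivative_prod unfolding differentiable_def by blast
qed

lemma hp_deriv:
  assumes "homogeneous_poly k f"
  shows "\<exists>f'. (f has_derivative f') (at x)"
proof -
  obtain A coef where A: "finite A" "\<forall>\<alpha>\<in>A. sum \<alpha> UNIV = k"
    "\<forall>x. f x = (\<Sum>\<alpha>\<in>A. coef \<alpha> * (\<Prod>i\<in>UNIV. (x $ i) ^ (\<alpha> i)))"
    using assms unfolding homogeneous_poly_def by blast
  have fe: "f = (\<lambda>x. (\<Sum>\<alpha>\<in>A. coef \<alpha> * (\<Prod>i\<in>UNIV. (x $ i) ^ (\<alpha> i))))"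
    using A(3) by auto
  have "(\<lambda>x. (\<Sum>\<alpha>\<in>A. coef \<alpha> * (\<Prod>i\<in>UNIV. (x $ i) ^ (\<alpha> i)))) differentiable (at x)"
    using A(1) by (auto intro!: differentiable_sum differentiable_mult differentiable_prod' differentiable_power
        differentiable_const bounded_linear_imp_differentiable[OF bounded_linear_vec_nth]) 
  then show ?thesis unfolding fe differentiable_def by blast
qed

lemma hp_euler:
  assumes "homogeneous_poly k f" and "(f has_derivative f') (at x)"
  shows "f' x = real k * f x"
proof -
  have "((\<lambda>t. x + t *\<^sub>R x) has_derivative (\<lambda>t. t *\<^sub>R x)) (at 0)"
    by (auto intro!: derivative_eq_intros)
  moreover have "(f has_derivative f') (at (x + 0 *\<^sub>R x))" using assms by simp
  ultimately have "((\<lambda>t. f (x + t *\<^sub>R x)) has_derivative (\<lambda>t. f' (t *\<^sub>R x))) (at 0)"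
    using has_derivative_compose[of "\<lambda>t. x + t *\<^sub>R x" _ 0 UNIV f f'] by (simp add: o_def)
  moreover have "(\<lambda>t. f' (t *\<^sub>R x)) = (\<lambda>t. t * f' x)"
    using has_derivative_linear[OF assms(2)] by (simp add: linear_scale)
  ultimately have "((\<lambda>t. f (x + t *\<^sub>R x)) has_derivative (\<lambda>t. f' x * t)) (at 0)"
    by (simp add: mult.commute)
  then have d1: "((\<lambda>t. f (x + t *\<^sub>R x)) has_field_derivative f' x) (at 0)"
    by (simp add: has_field_derivative_def)
  have "(\<lambda>t. f (x + t *\<^sub>R x)) = (\<lambda>t. (1 + t) ^ k * f x)"
    using hp_homog[OF assms(1)] by (metis scaleR_collapse scaleR_add_left scaleR_one)
  moreover have "((\<lambda>t::real. (1 + t) ^ k * f x) has_field_derivative real k * f x) (at 0)"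
    by (auto intro!: derivative_eq_intros)
  ultimately have "((\<lambda>t. f (x + t *\<^sub>R x)) has_field_derivative real k * f x) (at 0)" by simp
  with d1 show ?thesis using DERIV_unique by blast
qed

lemma key:
  fixes v x :: "'d::finite \<Rightarrow> real" and d :: "'d \<Rightarrow> 'd \<Rightarrow> real"
  assumes E: "\<And>j. (\<Sum>l\<in>UNIV. x l * d j l) = c * v j"
  shows "(\<Sum>l\<in>UNIV. (v i * x l - v l * x i) *
     (d j l * x k + v j * (if k = l then 1 else 0) - (d k l * x j + v k * (if j = l then 1 else 0))))
   = (c+1)*(v i * v j * x k - v i * v k * x j) - x i * x k * (\<Sum>l\<in>UNIV. v l * d j l) + x i * x j * (\<Sum>l\<in>UNIV. v l * d k l)"
proof -
  have "(\<Sum>l\<in>UNIV. (v i * x l - v l * x i) *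
     (d j l * x k + v j * (if k = l then 1 else 0) - (d k l * x j + v k * (if j = l then 1 else 0))))
    = (\<Sum>l\<in>UNIV. v i * x k * (x l * d j l) - x i * x k * (v l * d j l)
         - (v i * x j * (x l * d k l) - x i * x j * (v l * d k l))
         + (if k = l then (v i * x l - v l * x i) * v j else 0)
         - (if j = l then (v i * x l - v l * x i) * v k else 0))"
    by (rule sum.cong) (auto simp: algebra_simps)
  also have "\<dots> = v i * x k * (\<Sum>l\<in>UNIV. x l * d j l) - x i * x k * (\<Sum>l\<in>UNIV. v l * d j l)
         - (v i * x j * (\<Sum>l\<in>UNIV. x l * d k l) - x i * x j * (\<Sum>l\<in>UNIV. v l * d k l))
         + (v i * x k - v k * x i) * v j - (v i * x j - v j * x i) * v k"
    by (simp add: sum.distrib sum_subtractf sum_distrib_left)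
  also have "\<dots> = (c+1)*(v i * v j * x k - v i * v k * x j) - x i * x k * (\<Sum>l\<in>UNIV. v l * d j l) + x i * x j * (\<Sum>l\<in>UNIV. v l * d k l)"
    by (simp add: E algebra_simps)
  finally show ?thesis .
qed

theorem lemmaA1:
  fixes V :: "'d::finite \<Rightarrow> real^'d \<Rightarrow> real" and k :: nat
  assumes "k \<ge> 2"
    and "\<forall>j. homogeneous_poly k (V j)"
    and "V \<noteq> (\<lambda>j x. 0)"
  shows "poisson_bivector (wedge2 V euler_field)"
  unfolding poisson_bivector_def
proof (intro allI)
  fix i j m :: 'd and x :: "real^'d"
  let ?P = "wedge2 V euler_field"
  have "\<forall>j. \<exists>f'. (V j has_derivative f') (at x)" using hp_deriv assms(2) by blast
  then obtain V' where V': "\<And>j. (V j has_derivative V' j) (at x)" by metis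
  have lin: "\<And>j. linear (V' j)" using V' has_derivative_linear by blast
  have dP: "(?P a b has_derivative (\<lambda>h. V' a h * x$b + V a x * h$b - (V' b h * x$a + V b x * h$a))) (at x)"
    for a b
    unfolding wedge2_def euler_field_def
    by (auto intro!: derivative_eq_intros V' bounded_linear.has_derivative[OF bounded_linear_vec_nth])
  have pP: "partial l (?P a b) x = V' a (axis l 1) * x$b + V a x * (if b = l then 1 else 0)
      - (V' b (axis l 1) * x$a + V b x * (if a = l then 1 else 0))" for a b l
    using partial_hd[OF dP] by (simp add: axis_def)
  have Pv: "?P a b x = V a x * x$b - V b x * x$a" for a b
    by (simp add: wedge2_def euler_field_def)
  have E: "(\<Sum>l\<in>UNIV. x$l * V' a (axis l 1)) = real k * V a x" for a
  proof -
    have "(\<Sum>l\<in>UNIV. x$l * V' a (axis l 1)) = V' a (\<Sum>l\<in>UNIV. x$l *\<^sub>R axis l 1)"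
      using lin[of a] by (simp add: linear_sum linear_scale)
    also have "(\<Sum>l\<in>UNIV. x$l *\<^sub>R axis l 1) = x"
      using basis_expansion[of x] by (simp add: scalar_mult_eq_scaleR)
    finally show ?thesis using hp_euler[OF _ V'] assms(2) by simp
  qed
  note K = key[where v="\<lambda>a. V a x" and x="\<lambda>a. x$a" and d="\<lambda>a l. V' a (axis l 1)" and c="real k", OF E]
  have "schouten_self ?P i j m x =
     (\<Sum>l\<in>UNIV. (V i x * x$l - V l x * x$i) * partial l (?P j m) x)
   + (\<Sum>l\<in>UNIV. (V j x * x$l - V l x * x$j) * partial l (?P m i) x)
   + (\<Sum>l\<in>UNIV. (V m x * x$l - V l x * x$m) * partial l (?P i j) x)"
    unfolding schouten_self_def by (simp add: sum.distrib Pv)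
  also have "\<dots> = 0"
    unfolding pP K by (simp add: algebra_simps)
  finally show "schouten_self ?P i j m x = 0" .
qed

end
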